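(* Let $n,m\in\{0,1,2,\dots\}\cup\{\infty\}$ with $n+m\neq 0$. Then there exists a closed symmetric invertible (injective) operator $A$ in a complex Hilbert space $H$ with $\overline{D(A)}=H$ and $\overline{R(A)}=H$ which has deficiency index $(n,m)$.
   Context: The deficiency index of a closed symmetric operator $A$ in $H$ is the pair $(\dim\mathcal{N}_z(A),\dim\mathcal{N}_{\overline z}(A))$ for $z\in\mathbb{C}_+$, where $\mathcal{N}_z(A)=H\ominus(A-zE_H)D(A)$. *)

theory Defs
  imports "HOL-Analysis.Analysis" "HOL-Library.Extended_Nat" "HOL-Library.Function_Algebras"
begin

text \<open>The complex Hilbert space H is realised concretely as l2(N) = square-summable
  complex sequences, with the usual inner product and norm.\<close>

type_synonym vec = "nat \<Rightarrow> complex"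

definition l2 :: "vec set" where
  "l2 = {f. summable (\<lambda>k. (cmod (f k))\<^sup>2)}"

definition l2_inner :: "vec \<Rightarrow> vec \<Rightarrow> complex" where
  "l2_inner f g = (\<Sum>k. f k * cnj (g k))"

definition l2_norm :: "vec \<Rightarrow> real" where
  "l2_norm f = sqrt (\<Sum>k. (cmod (f k))\<^sup>2)"

definition vscale :: "complex \<Rightarrow> vec \<Rightarrow> vec" where
  "vscale c f = (\<lambda>k. c * f k)"

definition l2_tendsto :: "(nat \<Rightarrow> vec) \<Rightarrow> vec \<Rightarrow> bool" where
  "l2_tendsto x l \<longleftrightarrow> ((\<lambda>j. l2_norm (x j - l)) \<longlonglongrightarrow> 0)"

definition l2_dense :: "vec set \<Rightarrow> bool" where
  "l2_dense S \<longleftrightarrow> (\<forall>x\<in>l2. \<forall>e>0. \<exists>s\<in>S. l2_norm (x - s) < e)"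

definition linear_subspace :: "vec set \<Rightarrow> bool" where
  "linear_subspace S \<longleftrightarrow> S \<subseteq> l2 \<and> 0 \<in> S \<and> (\<forall>x\<in>S. \<forall>y\<in>S. x + y \<in> S)
     \<and> (\<forall>c. \<forall>x\<in>S. vscale c x \<in> S)"

definition lin_operator :: "vec set \<Rightarrow> (vec \<Rightarrow> vec) \<Rightarrow> bool" where
  "lin_operator D A \<longleftrightarrow> linear_subspace D \<and> A ` D \<subseteq> l2
     \<and> (\<forall>x\<in>D. \<forall>y\<in>D. A (x + y) = A x + A y)
     \<and> (\<forall>c. \<forall>x\<in>D. A (vscale c x) = vscale c (A x))"

definition closed_op :: "vec set \<Rightarrow> (vec \<Rightarrow> vec) \<Rightarrow> bool" where
  "closed_op D A \<longleftrightarrow> (\<forall>x u v. (\<forall>j. x j \<in> D) \<and> u \<in> l2 \<and> v \<in> l2 \<and>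
      l2_tendsto x u \<and> l2_tendsto (\<lambda>j. A (x j)) v \<longrightarrow> u \<in> D \<and> A u = v)"

definition symmetric_op :: "vec set \<Rightarrow> (vec \<Rightarrow> vec) \<Rightarrow> bool" where
  "symmetric_op D A \<longleftrightarrow> (\<forall>x\<in>D. \<forall>y\<in>D. l2_inner (A x) y = l2_inner x (A y))"

definition orth_compl :: "vec set \<Rightarrow> vec set" where
  "orth_compl S = {h\<in>l2. \<forall>y\<in>S. l2_inner h y = 0}"

definition lin_independent :: "vec set \<Rightarrow> bool" where
  "lin_independent B \<longleftrightarrow> (\<forall>c. (\<Sum>b\<in>B. vscale (c b) b) = 0 \<longrightarrow> (\<forall>b\<in>B. c b = 0))"

definition vdim :: "vec set \<Rightarrow> enat" where
  "vdim S = Sup {enat (card B) | B. finite B \<and> B \<subseteq> S \<and> lin_independent B}"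

definition defect_space :: "vec set \<Rightarrow> (vec \<Rightarrow> vec) \<Rightarrow> complex \<Rightarrow> vec set" where
  "defect_space D A z = orth_compl ((\<lambda>x. A x - vscale z x) ` D)"

definition has_deficiency_index :: "vec set \<Rightarrow> (vec \<Rightarrow> vec) \<Rightarrow> enat \<Rightarrow> enat \<Rightarrow> bool" where
  "has_deficiency_index D A n m \<longleftrightarrow>
     (\<forall>z. Im z > 0 \<longrightarrow> vdim (defect_space D A z) = n \<and> vdim (defect_space D A (cnj z)) = m)"

end

theory Submission
  imports Defs
begin


lemma l2_iff: "f \<in> l2 \<longleftrightarrow> summable (\<lambda>k. (cmod (f k))\<^sup>2)"
  by (simp add: l2_def)

lemma real_sq_ineq: "(x + y)\<^sup>2 \<le> 2*x\<^sup>2 + 2*(y::real)\<^sup>2" "2*x*y \<le> x\<^sup>2 + y\<^sup>2"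
proof -
  have "0 \<le> (x - y)\<^sup>2" by simp
  thus "(x + y)\<^sup>2 \<le> 2*x\<^sup>2 + 2*(y::real)\<^sup>2" "2*x*y \<le> x\<^sup>2 + y\<^sup>2"
    by (simp_all add: power2_eq_square algebra_simps)
qed

lemma sq_add_le: "(cmod (a + b))\<^sup>2 \<le> 2 * (cmod a)\<^sup>2 + 2 * (cmod b)\<^sup>2"
proof -
  have "cmod (a + b) \<le> cmod a + cmod b" by (rule norm_triangle_ineq)
  hence "(cmod (a + b))\<^sup>2 \<le> (cmod a + cmod b)\<^sup>2"
    by (simp add: power_mono)
  also have "\<dots> \<le> 2 * (cmod a)\<^sup>2 + 2 * (cmod b)\<^sup>2"
    by (rule real_sq_ineq)
  finally show ?thesis .
qed

lemma l2_add: "f \<in> l2 \<Longrightarrow> g \<in> l2 \<Longrightarrow> f + g \<in> l2"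
  unfolding l2_iff
  by (rule summable_comparison_test[where g="\<lambda>k. 2 * (cmod (f k))\<^sup>2 + 2 * (cmod (g k))\<^sup>2"])
     (auto intro!: summable_add summable_mult sq_add_le)

lemma l2_mult: assumes "\<And>k. cmod (m k) \<le> B" "f \<in> l2" shows "(\<lambda>k. m k * f k) \<in> l2"
  unfolding l2_iff
proof (rule summable_comparison_test[where g="\<lambda>k. B\<^sup>2 * (cmod (f k))\<^sup>2"])
  show "summable (\<lambda>k. B\<^sup>2 * (cmod (f k))\<^sup>2)" using assms(2) unfolding l2_iff by (rule summable_mult)
  show "\<exists>N. \<forall>n\<ge>N. norm ((cmod (m n * f n))\<^sup>2) \<le> B\<^sup>2 * (cmod (f n))\<^sup>2"
  proof (intro exI allI impI)
    fix n
    have "cmod (m n * f n) \<le> B * cmod (f n)" by (simp add: norm_mult assms(1) mult_right_mono)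
    hence "(cmod (m n * f n))\<^sup>2 \<le> (B * cmod (f n))\<^sup>2" by (simp add: power_mono)
    thus "norm ((cmod (m n * f n))\<^sup>2) \<le> B\<^sup>2 * (cmod (f n))\<^sup>2" by (simp add: power_mult_distrib)
  qed
qed

lemma l2_vscale: "f \<in> l2 \<Longrightarrow> vscale c f \<in> l2"
  unfolding vscale_def by (rule l2_mult[where B="cmod c"]) auto

lemma l2_uminus: "f \<in> l2 \<Longrightarrow> - f \<in> l2"
  using l2_vscale[of f "-1"] by (simp add: vscale_def fun_Compl_def)

lemma l2_diff: "f \<in> l2 \<Longrightarrow> g \<in> l2 \<Longrightarrow> f - g \<in> l2"
  using l2_add[of f "- g"] l2_uminus by simp

lemma l2_zero: "0 \<in> l2" by (simp add: l2_iff)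

lemma l2_finite: assumes "finite {k. f k \<noteq> 0}" shows "f \<in> l2"
  unfolding l2_iff
proof (rule summable_finite[OF assms])
  fix n assume "n \<notin> {k. f k \<noteq> 0}" thus "(cmod (f n))\<^sup>2 = 0" by simp
qed

lemma inner_summable_norm: assumes "f \<in> l2" "g \<in> l2"
  shows "summable (\<lambda>k. norm (f k * cnj (g k)))"
proof (rule summable_comparison_test[where g="\<lambda>k. (cmod (f k))\<^sup>2 + (cmod (g k))\<^sup>2"])
  show "summable (\<lambda>k. (cmod (f k))\<^sup>2 + (cmod (g k))\<^sup>2)" using assms unfolding l2_iff by (rule summable_add)
  show "\<exists>N. \<forall>n\<ge>N. norm (norm (f n * cnj (g n))) \<le> (cmod (f n))\<^sup>2 + (cmod (g n))\<^sup>2"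
  proof (intro exI allI impI)
    fix n
    have "cmod (f n) * cmod (g n) \<le> (cmod (f n))\<^sup>2 + (cmod (g n))\<^sup>2"
      using real_sq_ineq(2)[of "cmod (f n)" "cmod (g n)"] mult_nonneg_nonneg[OF norm_ge_zero norm_ge_zero, of "f n" "g n"]
      by linarith
    thus "norm (norm (f n * cnj (g n))) \<le> (cmod (f n))\<^sup>2 + (cmod (g n))\<^sup>2" by (simp add: norm_mult)
  qed
qed

lemma inner_summable: "f \<in> l2 \<Longrightarrow> g \<in> l2 \<Longrightarrow> summable (\<lambda>k. f k * cnj (g k))"
  by (rule summable_norm_cancel, rule inner_summable_norm)

lemma coord_le_sum: assumes "f \<in> l2" shows "(cmod (f p))\<^sup>2 \<le> (\<Sum>k. (cmod (f k))\<^sup>2)"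
  using assms unfolding l2_iff
  using sum_le_suminf[of "\<lambda>k. (cmod (f k))\<^sup>2" "{p}"] by simp

lemma coord_le_norm: assumes "f \<in> l2" shows "cmod (f p) \<le> l2_norm f"
  unfolding l2_norm_def using coord_le_sum[OF assms] real_le_rsqrt by blast

lemma l2_tendsto_coord: assumes "\<And>j. x j \<in> l2" "u \<in> l2" "l2_tendsto x u"
  shows "(\<lambda>j. x j p) \<longlonglongrightarrow> u p"
proof -
  have lim: "(\<lambda>j. l2_norm (x j - u)) \<longlonglongrightarrow> 0" using assms(3) by (simp add: l2_tendsto_def)
  have ev: "eventually (\<lambda>j. norm (x j p - u p) \<le> l2_norm (x j - u)) sequentially"
    using coord_le_norm[OF l2_diff[OF assms(1) assms(2)]] by (intro always_eventually) simp
  have "(\<lambda>j. x j p - u p) \<longlonglongrightarrow> 0" by (rule Lim_null_comparison[OF ev lim])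
  thus ?thesis by (simp add: LIM_zero_iff)
qed

lemma l2_tendsto0: "summable (\<lambda>k. (cmod (f k))\<^sup>2) \<Longrightarrow> f \<longlonglongrightarrow> 0"
proof -
  assume "summable (\<lambda>k. (cmod (f k))\<^sup>2)"
  hence "(\<lambda>k. (cmod (f k))\<^sup>2) \<longlonglongrightarrow> 0" by (rule summable_LIMSEQ_zero)
  hence "(\<lambda>k. sqrt ((cmod (f k))\<^sup>2)) \<longlonglongrightarrow> sqrt 0" by (intro tendsto_real_sqrt)
  hence "(\<lambda>k. norm (f k)) \<longlonglongrightarrow> 0" by simp
  thus ?thesis by (simp add: tendsto_norm_zero_iff)
qed


locale chainsys =
  fixes \<sigma> :: "nat \<Rightarrow> nat" and P :: "nat set"
  assumes sm: "strict_mono \<sigma>" and s0: "0 < \<sigma> 0" and PH: "P \<inter> range \<sigma> = {}"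
begin

lemma inj_s: "inj \<sigma>" using sm strict_mono_imp_inj_on by blast

lemma s_gt: "k < \<sigma> k"
proof (induction k)
  case 0 thus ?case using s0 by simp
next
  case (Suc k)
  have "\<sigma> k < \<sigma> (Suc k)" using sm by (simp add: strict_mono_def)
  thus ?case using Suc by simp
qed

lemma pow_ge: "j + c \<le> (\<sigma> ^^ j) c"
proof (induction j)
  case 0 thus ?case by simp
next
  case (Suc j) thus ?case using s_gt[of "(\<sigma> ^^ j) c"] by simp
qed

lemma pow_sm: "strict_mono (\<lambda>j. (\<sigma> ^^ j) c)"
  by (rule strict_mono_Suc_iff[THEN iffD2]) (simp add: s_gt)

definition V :: "vec \<Rightarrow> vec" where
  "V f = (\<lambda>p. if p \<in> range \<sigma> then f (inv \<sigma> p) else 0)"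

lemma V_s[simp]: "V f (\<sigma> q) = f q"
  by (simp add: V_def inj_s)

lemma V_notin: "p \<notin> range \<sigma> \<Longrightarrow> V f p = 0"
  by (simp add: V_def)

lemma V_lin: "V (\<lambda>p. a * f p + b * g p) = (\<lambda>p. a * V f p + b * V g p)"
  by (auto simp: V_def)

lemma V_l2: assumes "f \<in> l2" shows "V f \<in> l2"
proof -
  have "(\<lambda>n. (cmod (f n))\<^sup>2) sums (\<Sum>k. (cmod (f k))\<^sup>2)" using assms by (simp add: l2_iff summable_sums)
  hence "(\<lambda>n. (cmod (V f (\<sigma> n)))\<^sup>2) sums (\<Sum>k. (cmod (f k))\<^sup>2)" by simp
  hence "(\<lambda>n. (cmod (V f n))\<^sup>2) sums (\<Sum>k. (cmod (f k))\<^sup>2)"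
    by (subst (asm) sums_mono_reindex[OF sm]) (auto simp: V_notin)
  thus ?thesis by (auto simp: l2_iff sums_summable)
qed

lemma V_fix: assumes "\<And>p. h p = c * V h p" shows "h p = 0"
proof (induction p rule: less_induct)
  case (less p)
  show ?case
  proof (cases "p \<in> range \<sigma>")
    case True
    then obtain q where q: "p = \<sigma> q" by auto
    hence "q < p" using s_gt by simp
    thus ?thesis using assms[of p] less q by simp
  next
    case False thus ?thesis using assms[of p] V_notin by simp
  qed
qed

lemma V_fix0: assumes "\<And>p. h p = c * V h p" shows "h = 0"
  using V_fix[OF assms] by (simp add: fun_eq_iff)

lemma chain_ex: "\<exists>c j. c \<notin> range \<sigma> \<and> (\<sigma> ^^ j) c = p"
proof (induction p rule: less_induct)
  case (less p)
  show ?case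
  proof (cases "p \<in> range \<sigma>")
    case True
    then obtain q where q: "p = \<sigma> q" by auto
    hence "q < p" using s_gt by simp
    then obtain c j where "c \<notin> range \<sigma>" "(\<sigma> ^^ j) c = q" using less by blast
    thus ?thesis using q by (intro exI[of _ c] exI[of _ "Suc j"]) simp
  next
    case False thus ?thesis by (intro exI[of _ p] exI[of _ 0]) simp
  qed
qed

lemma chain_uniq: "c \<notin> range \<sigma> \<Longrightarrow> c' \<notin> range \<sigma> \<Longrightarrow> (\<sigma> ^^ j) c = (\<sigma> ^^ j') c' \<Longrightarrow> c = c' \<and> j = j'"
proof (induction j arbitrary: j')
  case 0
  thus ?case by (cases j') auto
next
  case (Suc j)
  show ?case
  proof (cases j')
    case 0 thus ?thesis using Suc by auto
  next
    case (Suc j'')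
    have "\<sigma> ((\<sigma> ^^ j) c) = \<sigma> ((\<sigma> ^^ j'') c')" using Suc.prems(3) \<open>j' = Suc j''\<close> by simp
    hence "(\<sigma> ^^ j) c = (\<sigma> ^^ j'') c'" by (rule injD[OF inj_s])
    from Suc.IH[OF Suc.prems(1,2) this] show ?thesis using \<open>j' = Suc j''\<close> by simp
  qed
qed

definition head :: "nat \<Rightarrow> nat" where
  "head p = (SOME c. c \<notin> range \<sigma> \<and> (\<exists>j. (\<sigma> ^^ j) c = p))"
definition dep :: "nat \<Rightarrow> nat" where
  "dep p = (SOME j. (\<sigma> ^^ j) (head p) = p)"

lemma head_dep: "head p \<notin> range \<sigma>" "(\<sigma> ^^ dep p) (head p) = p"
proof -
  have ex: "\<exists>c. c \<notin> range \<sigma> \<and> (\<exists>j. (\<sigma> ^^ j) c = p)" using chain_ex[of p] by blast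
  have h: "head p \<notin> range \<sigma> \<and> (\<exists>j. (\<sigma> ^^ j) (head p) = p)"
    unfolding head_def by (rule someI_ex[OF ex])
  thus "head p \<notin> range \<sigma>" by simp
  from h have "\<exists>j. (\<sigma> ^^ j) (head p) = p" by simp
  thus "(\<sigma> ^^ dep p) (head p) = p"
    unfolding dep_def by (rule someI_ex)
qed

lemma head_dep_uniq: assumes "c \<notin> range \<sigma>" "(\<sigma> ^^ j) c = p" shows "head p = c" "dep p = j"
proof -
  have "(\<sigma> ^^ dep p) (head p) = (\<sigma> ^^ j) c" using head_dep(2)[of p] assms(2) by simp
  from chain_uniq[OF head_dep(1)[of p] assms(1) this] show "head p = c" "dep p = j" by simp_all
qed

lemma head_s[simp]: "head (\<sigma> p) = head p" and dep_s[simp]: "dep (\<sigma> p) = Suc (dep p)"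
proof -
  have "(\<sigma> ^^ Suc (dep p)) (head p) = \<sigma> p" using head_dep(2)[of p] by simp
  from head_dep_uniq[OF head_dep(1)[of p] this]
  show "head (\<sigma> p) = head p" "dep (\<sigma> p) = Suc (dep p)" by simp_all
qed

lemma head_pow[simp]: "c \<notin> range \<sigma> \<Longrightarrow> head ((\<sigma> ^^ j) c) = c"
  and dep_pow[simp]: "c \<notin> range \<sigma> \<Longrightarrow> dep ((\<sigma> ^^ j) c) = j"
  using head_dep_uniq[of c j "(\<sigma> ^^ j) c"] by simp_all

definition eps :: "nat \<Rightarrow> complex" where
  "eps p = (if head p \<in> P then 1 else -1)"

lemma eps_s[simp]: "eps (\<sigma> p) = eps p" by (simp add: eps_def)
lemma eps_sq[simp]: "eps p * eps p = 1" by (simp add: eps_def)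
lemma eps_norm[simp]: "cmod (eps p) = 1" by (simp add: eps_def)
lemma eps_cnj[simp]: "cnj (eps p) = eps p" by (simp add: eps_def)

lemma V_eps: "V (\<lambda>p. eps p * f p) = (\<lambda>p. eps p * V f p)"
  by (auto simp: V_def fun_eq_iff inj_s)

lemma V_diff: "V (f - g) = V f - V g"
  by (auto simp: V_def fun_eq_iff)
lemma V_add: "V (f + g) = V f + V g"
  by (auto simp: V_def fun_eq_iff)
lemma V_scale: "V (vscale c f) = vscale c (V f)"
  by (auto simp: V_def fun_eq_iff vscale_def)
lemma V_zero: "V 0 = 0"
  by (auto simp: V_def fun_eq_iff)

definition L :: "vec \<Rightarrow> vec" where "L f = f - V f"

lemma L_inj: "L f = L g \<Longrightarrow> f = g"
proof -
  assume "L f = L g"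
  hence eq: "\<And>p. f p - V f p = g p - V g p" by (simp add: L_def fun_eq_iff)
  have "(f - g) p = 1 * V (f - g) p" for p
  proof -
    have "V (f - g) p = V f p - V g p" by (simp add: V_diff)
    thus ?thesis using eq[of p] by (simp add: algebra_simps) (metis add_diff_cancel_left' diff_add_cancel diff_diff_eq2)
  qed
  from V_fix0[OF this] show "f = g" by (simp add: fun_eq_iff)
qed

definition D :: "vec set" where "D = L ` l2"

definition Finv :: "vec \<Rightarrow> vec" where "Finv g = inv_into l2 L g"

lemma Finv_L: "f \<in> l2 \<Longrightarrow> Finv (L f) = f"
  unfolding Finv_def by (rule inv_into_f_f) (auto intro: inj_onI L_inj)

definition Aop :: "vec \<Rightarrow> vec" where
  "Aop g = (\<lambda>p. \<i> * eps p * (Finv g p + V (Finv g) p))"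

lemma A_L: "f \<in> l2 \<Longrightarrow> Aop (L f) = (\<lambda>p. \<i> * eps p * (f p + V f p))"
  by (simp add: Aop_def Finv_L)

lemma L_l2: "f \<in> l2 \<Longrightarrow> L f \<in> l2"
  by (simp add: L_def l2_diff V_l2)

end


context chainsys begin

lemma L_add: "L f + L g = L (f + g)" by (simp add: L_def V_add)
lemma L_scale: "vscale c (L f) = L (vscale c f)"
  by (auto simp: L_def V_def vscale_def fun_eq_iff algebra_simps)
lemma V_mult: "V (\<lambda>k. c * f k) = (\<lambda>p. c * V f p)" by (auto simp: V_def fun_eq_iff)
lemma eps_nz[simp]: "eps p \<noteq> 0" by (simp add: eps_def)
lemma D_Finv: "x \<in> D \<Longrightarrow> Finv x \<in> l2 \<and> x = L (Finv x)"
  by (auto simp: D_def Finv_L)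
lemma L_zero: "L 0 = 0" by (simp add: L_def V_zero)

lemma D_sub: "D \<subseteq> l2" using L_l2 by (auto simp: D_def)

lemma AL_l2: "f \<in> l2 \<Longrightarrow> (\<lambda>p. \<i> * eps p * (f p + V f p)) \<in> l2"
  by (rule l2_mult[where B=1]) (auto simp: norm_mult l2_add[unfolded plus_fun_def] V_l2
        intro: l2_add[of f "V f", unfolded plus_fun_def])

lemma subspace_D: "linear_subspace D"
  unfolding linear_subspace_def
proof (intro conjI ballI allI)
  show "D \<subseteq> l2" by (rule D_sub)
  show "0 \<in> D" unfolding D_def using L_zero l2_zero by (metis image_eqI)
  fix x y assume "x \<in> D" "y \<in> D"
  then obtain f g where "f \<in> l2" "g \<in> l2" "x = L f" "y = L g" by (auto simp: D_def)
  thus "x + y \<in> D" unfolding D_def using L_add l2_add by auto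
next
  fix c x assume "x \<in> D"
  then obtain f where "f \<in> l2" "x = L f" by (auto simp: D_def)
  thus "vscale c x \<in> D" unfolding D_def using L_scale l2_vscale by auto
qed

lemma lin_op: "lin_operator D Aop"
  unfolding lin_operator_def
proof (intro conjI ballI allI)
  show "linear_subspace D" by (rule subspace_D)
  show "Aop ` D \<subseteq> l2" using A_L AL_l2 by (auto simp: D_def)
  fix x y assume "x \<in> D" "y \<in> D"
  then obtain f g where fg: "f \<in> l2" "g \<in> l2" "x = L f" "y = L g" by (auto simp: D_def)
  have "x + y = L (f + g)" using fg L_add by simp
  hence "Aop (x + y) = (\<lambda>p. \<i> * eps p * ((f + g) p + V (f + g) p))"
    using A_L[OF l2_add[OF fg(1,2)]] by simp
  also have "\<dots> = Aop (L f) + Aop (L g)"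
    using A_L[OF fg(1)] A_L[OF fg(2)] by (simp add: V_add fun_eq_iff algebra_simps)
  finally show "Aop (x + y) = Aop x + Aop y" using fg by simp
next
  fix c x assume "x \<in> D"
  then obtain f where f: "f \<in> l2" "x = L f" by (auto simp: D_def)
  have "vscale c x = L (vscale c f)" using f L_scale by simp
  hence "Aop (vscale c x) = (\<lambda>p. \<i> * eps p * (vscale c f p + V (vscale c f) p))"
    using A_L[OF l2_vscale[OF f(1)]] by simp
  also have "\<dots> = vscale c (Aop (L f))"
    using A_L[OF f(1)] by (simp add: V_mult fun_eq_iff algebra_simps vscale_def)
  finally show "Aop (vscale c x) = vscale c (Aop x)" using f by simp
qed

lemma inj_A: "inj_on Aop D"
proof (rule inj_onI)
  fix x y assume "x \<in> D" "y \<in> D" "Aop x = Aop y"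
  then obtain f g where fg: "f \<in> l2" "g \<in> l2" "x = L f" "y = L g" by (auto simp: D_def)
  have eq: "\<i> * eps p * (f p + V f p) = \<i> * eps p * (g p + V g p)" for p
    using \<open>Aop x = Aop y\<close> fg by (simp add: A_L fun_eq_iff)
  have "(f - g) p = (-1) * V (f - g) p" for p
  proof -
    have "eps p \<noteq> 0" by simp
    hence "f p + V f p = g p + V g p" using eq[of p] by simp
    thus ?thesis by (simp add: V_diff algebra_simps)
  qed
  from V_fix0[OF this] have "f = g" by (simp add: fun_eq_iff)
  thus "x = y" using fg by simp
qed

lemma closed_A: "closed_op D Aop"
  unfolding closed_op_def
proof (intro allI impI)
  fix x u v
  assume as: "(\<forall>j. x j \<in> D) \<and> u \<in> l2 \<and> v \<in> l2 \<and> l2_tendsto x u \<and> l2_tendsto (\<lambda>j. Aop (x j)) v"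
  define f where "f j = Finv (x j)" for j
  have fx: "f j \<in> l2" "x j = L (f j)" for j
    using as D_Finv[of "x j"] by (auto simp: f_def)
  have Ax: "Aop (x j) = (\<lambda>p. \<i> * eps p * (f j p + V (f j) p))" for j using fx A_L by simp
  have xl2: "x j \<in> l2" for j using fx L_l2 by simp
  have Axl2: "Aop (x j) \<in> l2" for j using Ax AL_l2 fx by simp
  have cu: "(\<lambda>j. x j p) \<longlonglongrightarrow> u p" for p using l2_tendsto_coord[of x u p] xl2 as by blast
  have cv: "(\<lambda>j. Aop (x j) p) \<longlonglongrightarrow> v p" for p
    using l2_tendsto_coord[of "\<lambda>j. Aop (x j)" v p] Axl2 as by blast
  define \<Phi> where "\<Phi> p = (v p / (\<i> * eps p) + u p) / 2" for p
  have fj: "f j p = (Aop (x j) p / (\<i> * eps p) + x j p) / 2" for j p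
  proof -
    have e: "eps p \<noteq> 0" by simp
    have a: "Aop (x j) p = \<i> * eps p * (f j p + V (f j) p)" using Ax[of j] by simp
    have b: "x j p = f j p - V (f j) p" using fx(2)[of j] by (simp add: L_def)
    show ?thesis unfolding a b using e by (simp add: field_simps)
  qed
  have cf: "(\<lambda>j. f j p) \<longlonglongrightarrow> \<Phi> p" for p
    unfolding fj \<Phi>_def by (intro tendsto_intros cu cv) (use eps_norm[of p] in auto)
  have cVf: "(\<lambda>j. V (f j) p) \<longlonglongrightarrow> V \<Phi> p" for p
    by (cases "p \<in> range \<sigma>") (auto simp: V_notin cf)
  have "\<Phi> = vscale (1/2) ((\<lambda>p. (1 / (\<i> * eps p)) * v p) + u)"
    by (simp add: \<Phi>_def vscale_def fun_eq_iff field_simps)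
  moreover have "(\<lambda>p. (1 / (\<i> * eps p)) * v p) \<in> l2"
    using as by (intro l2_mult[where B=1]) (auto simp: norm_divide norm_mult)
  ultimately have Phil2: "\<Phi> \<in> l2" using as by (simp add: l2_add l2_vscale)
  have "(\<lambda>j. x j p) \<longlonglongrightarrow> \<Phi> p - V \<Phi> p" for p
    unfolding fx(2) L_def by (simp add: tendsto_diff cf cVf)
  hence "u p = L \<Phi> p" for p using cu LIMSEQ_unique by (simp add: L_def) blast
  hence u: "u = L \<Phi>" by (simp add: fun_eq_iff)
  have "(\<lambda>j. Aop (x j) p) \<longlonglongrightarrow> \<i> * eps p * (\<Phi> p + V \<Phi> p)" for p
    unfolding Ax by (intro tendsto_intros cf cVf)
  hence "v p = Aop u p" for p using cv LIMSEQ_unique u A_L[OF Phil2] by simp blast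
  hence "Aop u = v" by (simp add: fun_eq_iff)
  moreover have "u \<in> D" using u Phil2 by (simp add: D_def)
  ultimately show "u \<in> D \<and> Aop u = v" by simp
qed

lemma l2_eps: "f \<in> l2 \<Longrightarrow> (\<lambda>p. eps p * f p) \<in> l2"
  by (rule l2_mult[where B=1]) auto

lemma reidx: assumes "f \<in> l2" "k \<in> l2"
  shows "(\<Sum>p. eps p * V f p * cnj (V k p)) = (\<Sum>p. eps p * f p * cnj (k p))"
proof -
  have s: "summable (\<lambda>p. eps p * f p * cnj (k p))"
    using inner_summable[OF l2_eps[OF assms(1)] assms(2)] by (simp add: mult.assoc)
  have "(\<lambda>q. eps (\<sigma> q) * V f (\<sigma> q) * cnj (V k (\<sigma> q))) sums (\<Sum>p. eps p * f p * cnj (k p))"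
    using s by (simp add: summable_sums)
  hence "(\<lambda>p. eps p * V f p * cnj (V k p)) sums (\<Sum>p. eps p * f p * cnj (k p))"
    by (subst (asm) sums_mono_reindex[OF sm]) (auto simp: V_notin)
  thus ?thesis by (rule sums_unique[symmetric])
qed

lemma sym_A: "symmetric_op D Aop"
  unfolding symmetric_op_def
proof (intro ballI)
  fix x y assume "x \<in> D" "y \<in> D"
  then obtain f k where fk: "f \<in> l2" "k \<in> l2" "x = L f" "y = L k" by (auto simp: D_def)
  have Vf: "V f \<in> l2" and Vk: "V k \<in> l2" using fk V_l2 by auto
  define t1 where "t1 p = eps p * f p * cnj (k p)" for p
  define t2 where "t2 p = eps p * V f p * cnj (k p)" for p
  define t3 where "t3 p = eps p * f p * cnj (V k p)" for p
  define t4 where "t4 p = eps p * V f p * cnj (V k p)" for p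
  have su: "summable t1" "summable t2" "summable t3" "summable t4"
    unfolding t1_def t2_def t3_def t4_def
    using inner_summable[OF l2_eps[OF fk(1)] fk(2)] inner_summable[OF l2_eps[OF Vf] fk(2)]
      inner_summable[OF l2_eps[OF fk(1)] Vk] inner_summable[OF l2_eps[OF Vf] Vk]
    by (simp_all add: mult.assoc)
  have e41: "suminf t4 = suminf t1" unfolding t1_def t4_def by (rule reidx[OF fk(1,2)])
  have "l2_inner (Aop x) y = (\<Sum>p. \<i> * (t1 p + t2 p - t3 p - t4 p))"
    unfolding l2_inner_def fk A_L[OF fk(1)] t1_def t2_def t3_def t4_def
    by (simp add: L_def algebra_simps)
  also have "\<dots> = \<i> * (suminf t1 + suminf t2 - suminf t3 - suminf t4)"
    by (intro sums_unique[symmetric] sums_mult sums_diff sums_add summable_sums su)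
  also have "\<dots> = \<i> * (suminf t2 - suminf t3)" using e41 by simp
  finally have lhs: "l2_inner (Aop x) y = \<i> * (suminf t2 - suminf t3)" .
  have "l2_inner x (Aop y) = (\<Sum>p. - \<i> * (t1 p + t3 p - t2 p - t4 p))"
    unfolding l2_inner_def fk A_L[OF fk(2)] t1_def t2_def t3_def t4_def
    by (simp add: L_def algebra_simps)
  also have "\<dots> = - \<i> * (suminf t1 + suminf t3 - suminf t2 - suminf t4)"
    by (intro sums_unique[symmetric] sums_mult sums_diff sums_add summable_sums su)
  also have "\<dots> = \<i> * (suminf t2 - suminf t3)" using e41 by (simp add: algebra_simps)
  finally show "l2_inner (Aop x) y = l2_inner x (Aop y)" using lhs by simp
qed

end


context chainsys begin

abbreviation gk :: "nat \<Rightarrow> nat \<Rightarrow> nat" where "gk k \<equiv> (\<lambda>j. (\<sigma> ^^ j) k)"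

lemma inj_g: "inj (gk k)" using pow_sm strict_mono_imp_inj_on by blast

definition cv :: "nat \<Rightarrow> (nat \<Rightarrow> complex) \<Rightarrow> vec" where
  "cv k a = (\<lambda>p. if p \<in> range (gk k) then a (inv (gk k) p) else 0)"

lemma cv_at[simp]: "cv k a ((\<sigma> ^^ j) k) = a j"
  by (simp add: cv_def inv_f_f[OF inj_g])

lemma cv_off: "p \<notin> range (gk k) \<Longrightarrow> cv k a p = 0"
  by (simp add: cv_def)

definition shift :: "(nat \<Rightarrow> complex) \<Rightarrow> nat \<Rightarrow> complex" where
  "shift a j = (case j of 0 \<Rightarrow> 0 | Suc i \<Rightarrow> a i)"

lemma V_cv: "V (cv k a) = cv k (shift a)"
proof (rule ext)
  fix p
  show "V (cv k a) p = cv k (shift a) p"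
  proof (cases "p \<in> range (gk k)")
    case True
    then obtain j where j: "p = (\<sigma> ^^ j) k" by auto
    show ?thesis
    proof (cases j)
      case 0
      hence pk: "p = k" using j by simp
      show ?thesis
      proof (cases "k \<in> range \<sigma>")
        case True
        then obtain q where q: "k = \<sigma> q" by auto
        have "q \<notin> range (gk k)"
        proof
          assume "q \<in> range (gk k)"
          then obtain i where "q = (\<sigma> ^^ i) k" by auto
          hence "k \<le> q" using pow_ge[of i k] by simp
          thus False using s_gt[of q] q by simp
        qed
        hence "V (cv k a) p = 0" using pk q by (simp add: cv_off)
        thus ?thesis using j 0 cv_at[of k "shift a" 0] by (simp add: shift_def)
      next
        case False thus ?thesis using pk j 0 cv_at[of k "shift a" 0] by (simp add: V_notin shift_def)
      qed
    next
      case (Suc i)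
      hence "p = \<sigma> ((\<sigma> ^^ i) k)" using j by simp
      thus ?thesis using j Suc cv_at[of k "shift a" "Suc i"] by (simp add: shift_def)
    qed
  next
    case False
    have "V (cv k a) p = 0"
    proof (cases "p \<in> range \<sigma>")
      case True
      then obtain q where q: "p = \<sigma> q" by auto
      have "q \<notin> range (gk k)"
      proof
        assume "q \<in> range (gk k)"
        then obtain i where "q = (\<sigma> ^^ i) k" by auto
        hence "p = (\<sigma> ^^ Suc i) k" using q by simp
        hence "p \<in> range (gk k)" by (metis rangeI)
        thus False using False by simp
      qed
      thus ?thesis using q by (simp add: cv_off)
    next
      case False thus ?thesis by (simp add: V_notin)
    qed
    thus ?thesis using False by (simp add: cv_off)
  qed
qed

lemma cv_comb: "(\<lambda>p. c1 * cv k a p + c2 * cv k b p) = cv k (\<lambda>j. c1 * a j + c2 * b j)"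
  by (auto simp: cv_def fun_eq_iff)

lemma delta_cv: "(if p = k then 1 else 0) = cv k (\<lambda>j. if j = 0 then 1 else 0) p"
proof -
  show "(if p = k then 1 else 0) = cv k (\<lambda>j. if j = 0 then 1 else 0) p"
  proof (cases "p \<in> range (gk k)")
    case True
    then obtain j where j: "p = (\<sigma> ^^ j) k" by auto
    have "p = k \<longleftrightarrow> j = 0"
    proof
      assume "p = k" thus "j = 0" using j pow_sm[of k] by (metis funpow_0 strict_mono_eq)
    qed (use j in simp)
    thus ?thesis using j by simp
  next
    case False
    hence "p \<noteq> k" by (metis funpow_0 rangeI)
    thus ?thesis using False by (simp add: cv_off)
  qed
qed

lemma cv_sums: assumes "summable (\<lambda>j. (cmod (a j))\<^sup>2)"
  shows "(\<lambda>p. (cmod (cv k a p))\<^sup>2) sums (\<Sum>j. (cmod (a j))\<^sup>2)"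
proof -
  have "(\<lambda>j. (cmod (cv k a ((\<sigma> ^^ j) k)))\<^sup>2) sums (\<Sum>j. (cmod (a j))\<^sup>2)"
    using assms by (simp add: summable_sums)
  thus ?thesis by (subst (asm) sums_mono_reindex[OF pow_sm]) (auto simp: cv_off)
qed

lemma cv_l2: "summable (\<lambda>j. (cmod (a j))\<^sup>2) \<Longrightarrow> cv k a \<in> l2"
  unfolding l2_iff by (rule sums_summable[OF cv_sums])

lemma approx_chain:
  assumes c: "cmod c = 1" and M: "M \<ge> 1"
  defines "a \<equiv> (\<lambda>j. if j < M then c ^ j * (1 - of_nat j / of_nat M) else 0 :: complex)"
  shows "cv k a \<in> l2"
    and "(\<lambda>p. (cmod ((\<lambda>p. if p = k then 1 else 0) p - (cv k a p - c * V (cv k a) p)))\<^sup>2)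
           sums (1 / real M)"
proof -
  have fin: "finite {j. a j \<noteq> 0}" by (rule finite_subset[of _ "{..<M}"]) (auto simp: a_def)
  show "cv k a \<in> l2"
    by (rule cv_l2, rule summable_finite[OF fin]) auto
  define b where "b j = (if 1 \<le> j \<and> j \<le> M then c ^ j / of_nat M else 0)" for j
  have bb: "(if j = 0 then 1 else 0) - (a j - c * shift a j) = b j" for j
  proof (cases j)
    case 0 thus ?thesis using M by (simp add: a_def b_def shift_def)
  next
    case (Suc i)
    have Mnz: "(of_nat M :: complex) \<noteq> 0" using M by simp
    consider "Suc i < M" | "Suc i = M" | "Suc i > M" by linarith
    thus ?thesis
    proof cases
      case 1 thus ?thesis using Suc Mnz by (simp add: a_def b_def shift_def field_simps)
    next
      case 2
      hence MM: "M = Suc i" by simp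
      show ?thesis unfolding a_def b_def shift_def MM using Suc
        by (simp add: field_simps of_nat_Suc del: of_nat_Suc) (simp add: algebra_simps)
    next
      case 3 thus ?thesis using Suc by (simp add: a_def b_def shift_def)
    qed
  qed
  have e: "(if p = k then 1 else 0) - (cv k a p - c * V (cv k a) p) = cv k b p" for p
  proof -
    note d = delta_cv[of p k]
    show ?thesis
      proof (cases "p \<in> range (gk k)")
        case True
        then obtain j where j: "p = (\<sigma> ^^ j) k" by auto
        have gk: "((\<sigma> ^^ j) k = k) = (j = 0)" using pow_ge[of j k] by auto
        show ?thesis using bb[of j] gk j by (simp add: V_cv)
      next
        case False thus ?thesis unfolding d V_cv by (simp add: cv_off)
      qed
  qed
  moreover have "(\<lambda>p. (cmod (cv k b p))\<^sup>2) sums (1 / real M)"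
  proof -
    have fb: "finite {j. b j \<noteq> 0}" by (rule finite_subset[of _ "{..M}"]) (auto simp: b_def)
    have "(\<lambda>j. (cmod (b j))\<^sup>2) sums (\<Sum>j\<in>{1..M}. (cmod (b j))\<^sup>2)"
      by (rule sums_finite) (auto simp: b_def)
    moreover have "(\<Sum>j\<in>{1..M}. (cmod (b j))\<^sup>2) = 1 / real M"
    proof -
      have "(\<Sum>j\<in>{1..M}. (cmod (b j))\<^sup>2) = (\<Sum>j\<in>{1..M}. 1 / (real M)\<^sup>2)"
        by (rule sum.cong) (auto simp: b_def norm_divide norm_power c power_divide)
      also have "\<dots> = 1 / real M" using M by (simp add: power2_eq_square)
      finally show ?thesis .
    qed
    ultimately have "(\<lambda>j. (cmod (b j))\<^sup>2) sums (1 / real M)" by simp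
    hence "summable (\<lambda>j. (cmod (b j))\<^sup>2)" "(\<Sum>j. (cmod (b j))\<^sup>2) = 1 / real M"
      by (auto simp: sums_iff)
    thus ?thesis using cv_sums[of b k] by simp
  qed
  ultimately show "(\<lambda>p. (cmod ((\<lambda>p. if p = k then 1 else 0) p - (cv k a p - c * V (cv k a) p)))\<^sup>2)
           sums (1 / real M)" by (simp only: e)
qed

end


definition esq :: "vec \<Rightarrow> real" where "esq x = (\<Sum>p. (cmod (x p))\<^sup>2)"
definition delta :: "nat \<Rightarrow> vec" where "delta k = (\<lambda>p. if p = k then 1 else 0)"

lemma delta_l2: "delta k \<in> l2"
  by (rule l2_finite, rule finite_subset[of _ "{k}"]) (auto simp: delta_def)

lemma sum_fun_app: "(\<Sum>i\<in>I. w i) p = (\<Sum>i\<in>I. w i p)"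
  by (induction I rule: infinite_finite_induct) auto

lemma sum_l2: "finite I \<Longrightarrow> (\<And>i. i \<in> I \<Longrightarrow> w i \<in> l2) \<Longrightarrow> (\<Sum>i\<in>I. w i) \<in> l2"
  by (induction I rule: finite_induct) (auto simp: l2_zero l2_add)

lemma esq_summable: "x \<in> l2 \<Longrightarrow> summable (\<lambda>p. (cmod (x p))\<^sup>2)" by (simp add: l2_iff)

lemma esq_sum_le: assumes "finite I" "\<And>i. i \<in> I \<Longrightarrow> w i \<in> l2"
  shows "esq (\<Sum>i\<in>I. w i) \<le> real (card I) * (\<Sum>i\<in>I. esq (w i))"
proof -
  have pt: "(cmod ((\<Sum>i\<in>I. w i) p))\<^sup>2 \<le> real (card I) * (\<Sum>i\<in>I. (cmod (w i p))\<^sup>2)" for p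
  proof -
    have "cmod ((\<Sum>i\<in>I. w i) p) \<le> (\<Sum>i\<in>I. cmod (w i p))" unfolding sum_fun_app by (rule norm_sum)
    hence "(cmod ((\<Sum>i\<in>I. w i) p))\<^sup>2 \<le> (\<Sum>i\<in>I. cmod (w i p))\<^sup>2" by (simp add: power_mono)
    also have "\<dots> \<le> (\<Sum>i\<in>I. (cmod (w i p))\<^sup>2) * card I" by (rule sum_squared_le_sum_of_squares)
    finally show ?thesis by (simp add: mult.commute)
  qed
  have s1: "summable (\<lambda>p. (cmod ((\<Sum>i\<in>I. w i) p))\<^sup>2)" using sum_l2[OF assms] by (simp add: l2_iff)
  have s2: "summable (\<lambda>p. real (card I) * (\<Sum>i\<in>I. (cmod (w i p))\<^sup>2))"
    by (intro summable_mult summable_sum esq_summable assms)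
  have "esq (\<Sum>i\<in>I. w i) \<le> (\<Sum>p. real (card I) * (\<Sum>i\<in>I. (cmod (w i p))\<^sup>2))"
    unfolding esq_def by (rule suminf_le[OF pt s1 s2])
  also have "\<dots> = real (card I) * (\<Sum>i\<in>I. esq (w i))"
    unfolding esq_def
  proof -
    have "(\<Sum>p. real (card I) * (\<Sum>i\<in>I. (cmod (w i p))\<^sup>2)) = real (card I) * (\<Sum>p. \<Sum>i\<in>I. (cmod (w i p))\<^sup>2)"
      by (rule suminf_mult, intro summable_sum esq_summable assms)
    also have "(\<Sum>p. \<Sum>i\<in>I. (cmod (w i p))\<^sup>2) = (\<Sum>i\<in>I. \<Sum>p. (cmod (w i p))\<^sup>2)"
      by (rule suminf_sum, intro esq_summable assms)
    finally show "(\<Sum>p. real (card I) * (\<Sum>i\<in>I. (cmod (w i p))\<^sup>2)) = real (card I) * (\<Sum>i\<in>I. \<Sum>p. (cmod (w i p))\<^sup>2)" .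
  qed
  finally show ?thesis .
qed

lemma esq_add_le: assumes "x \<in> l2" "y \<in> l2" shows "esq (x + y) \<le> 2 * esq x + 2 * esq y"
proof -
  have "esq (x + y) \<le> (\<Sum>p. 2 * (cmod (x p))\<^sup>2 + 2 * (cmod (y p))\<^sup>2)"
    unfolding esq_def
    by (rule suminf_le) (auto simp: sq_add_le esq_summable[OF l2_add[OF assms], simplified]
        intro!: summable_add summable_mult esq_summable assms)
  also have "\<dots> = 2 * esq x + 2 * esq y" unfolding esq_def
    by (subst suminf_add[symmetric]) (auto intro!: summable_mult esq_summable assms simp: suminf_mult
        suminf_mult[OF esq_summable[OF assms(1)]] suminf_mult[OF esq_summable[OF assms(2)]])
  finally show ?thesis .
qed

lemma esq_scale: "x \<in> l2 \<Longrightarrow> esq (vscale c x) = (cmod c)\<^sup>2 * esq x"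
  unfolding esq_def vscale_def by (simp add: norm_mult power_mult_distrib suminf_mult esq_summable)

lemma esq_nonneg: "x \<in> l2 \<Longrightarrow> 0 \<le> esq x"
  unfolding esq_def by (intro suminf_nonneg esq_summable) auto

lemma norm_lt: assumes "esq x < e\<^sup>2" "e > 0" shows "l2_norm x < e"
proof -
  have "l2_norm x = sqrt (esq x)" by (simp add: l2_norm_def esq_def)
  also have "\<dots> < sqrt (e\<^sup>2)" using assms(1) by (rule real_sqrt_less_mono)
  finally show ?thesis using assms(2) by simp
qed

lemma tail: assumes "x \<in> l2" "e > 0" shows "\<exists>M. esq (\<lambda>p. if p < M then 0 else x p) < e"
proof -
  define a where "a p = (cmod (x p))\<^sup>2" for p
  have sa: "summable a" unfolding a_def using assms(1) by (simp add: l2_iff)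
  have "(\<lambda>n. \<Sum>i<n. a i) \<longlonglongrightarrow> suminf a" by (rule summable_LIMSEQ[OF sa])
  hence "eventually (\<lambda>n. (\<Sum>i<n. a i) > suminf a - e) sequentially"
    using assms(2) by (intro order_tendstoD(1)) auto
  then obtain M where M: "(\<Sum>i<M. a i) > suminf a - e" by (auto simp: eventually_sequentially)
  have "(\<lambda>p. a p - (if p \<in> {..<M} then a p else 0)) sums (suminf a - (\<Sum>i<M. a i))"
    by (intro sums_diff summable_sums sa sums_If_finite_set) simp
  moreover have "(\<lambda>p. a p - (if p \<in> {..<M} then a p else 0)) = (\<lambda>p. (cmod (if p < M then 0 else x p))\<^sup>2)"
    by (auto simp: a_def fun_eq_iff)
  ultimately have "esq (\<lambda>p. if p < M then 0 else x p) = suminf a - (\<Sum>i<M. a i)"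
    unfolding esq_def by (simp add: sums_iff)
  thus ?thesis using M by (intro exI[of _ M]) simp
qed

lemma subspace_sum: assumes "linear_subspace S" "finite I" "\<And>i. i \<in> I \<Longrightarrow> w i \<in> S"
  shows "(\<Sum>i\<in>I. vscale (c i) (w i)) \<in> S"
  using assms(2,3)
proof (induction I rule: finite_induct)
  case empty
  have "0 \<in> S" using assms(1) by (simp add: linear_subspace_def)
  thus ?case by (simp only: sum.empty)
next
  case (insert i I)
  have a: "vscale (c i) (w i) \<in> S" using insert assms(1) by (simp add: linear_subspace_def)
  have b: "(\<Sum>i\<in>I. vscale (c i) (w i)) \<in> S" using insert by simp
  have "vscale (c i) (w i) + (\<Sum>i\<in>I. vscale (c i) (w i)) \<in> S"
    using assms(1) a b unfolding linear_subspace_def by blast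
  thus ?case by (simp only: sum.insert[OF insert.hyps])
qed

lemma dense_crit:
  assumes S: "linear_subspace S"
    and ap: "\<And>k \<eta>. \<eta> > 0 \<Longrightarrow> \<exists>s\<in>S. esq (delta k - s) < \<eta>"
  shows "l2_dense S"
  unfolding l2_dense_def
proof (intro ballI allI impI)
  fix x :: vec and e :: real assume x: "x \<in> l2" and e: "e > 0"
  have Sl2: "S \<subseteq> l2" using S by (simp add: linear_subspace_def)
  obtain M where M: "esq (\<lambda>p. if p < M then 0 else x p) < e\<^sup>2 / 4"
    using tail[OF x, of "e\<^sup>2/4"] e by auto
  define X where "X = (\<Sum>k<M. (cmod (x k))\<^sup>2) + 1"
  have X: "X > 0" unfolding X_def by (smt (verit) sum_nonneg zero_le_power2)
  define \<eta> where "\<eta> = e\<^sup>2 / (4 * (real M + 1) * X)"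
  have \<eta>: "\<eta> > 0" unfolding \<eta>_def using e X by simp
  have "\<forall>k. \<exists>s. s \<in> S \<and> esq (delta k - s) < \<eta>" using ap[OF \<eta>] by blast
  then obtain s where s: "\<And>k. s k \<in> S" "\<And>k. esq (delta k - s k) < \<eta>" by metis
  have sl2: "s k \<in> l2" for k using s Sl2 by auto
  define s' where "s' = (\<Sum>k<M. vscale (x k) (s k))"
  have s'S: "s' \<in> S" unfolding s'_def by (rule subspace_sum[OF S]) (auto simp: s)
  define t where "t = (\<lambda>p. if p < M then 0 else x p)"
  define w where "w k = vscale (x k) (delta k - s k)" for k
  have wl2: "w k \<in> l2" for k unfolding w_def by (intro l2_vscale l2_diff delta_l2 sl2)
  have "t = (\<lambda>p. (if p < M then 0 else 1) * x p)" by (auto simp: t_def)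
  hence tl2: "t \<in> l2" using l2_mult[where m="\<lambda>p. if p < M then 0 else 1" and B=1, OF _ x] by simp
  have decomp: "x - s' = t + (\<Sum>k<M. w k)"
  proof (rule ext)
    fix p
    have "(\<Sum>k<M. w k) p = (\<Sum>k<M. x k * delta k p) - (\<Sum>k<M. x k * s k p)"
      unfolding sum_fun_app w_def vscale_def by (simp add: algebra_simps sum_subtractf)
    also have "(\<Sum>k<M. x k * delta k p) = (if p < M then x p else 0)"
      by (simp add: delta_def if_distrib sum.delta cong: if_cong)
    finally show "(x - s') p = (t + (\<Sum>k<M. w k)) p"
      by (simp add: s'_def t_def sum_fun_app vscale_def)
  qed
  have h1: "esq (x - s') \<le> 2 * esq t + 2 * esq (\<Sum>k<M. w k)"
    unfolding decomp by (rule esq_add_le[OF tl2 sum_l2]) (auto simp: wl2)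
  have h2: "esq (\<Sum>k<M. w k) \<le> real M * (\<Sum>k<M. esq (w k))"
    using esq_sum_le[of "{..<M}" w] wl2 by simp
  have h3: "(\<Sum>k<M. esq (w k)) \<le> (\<Sum>k<M. (cmod (x k))\<^sup>2 * \<eta>)"
  proof (rule sum_mono)
    fix k assume "k \<in> {..<M}"
    have "esq (w k) = (cmod (x k))\<^sup>2 * esq (delta k - s k)"
      unfolding w_def by (rule esq_scale, intro l2_diff delta_l2 sl2)
    also have "\<dots> \<le> (cmod (x k))\<^sup>2 * \<eta>" using s(2)[of k] by (intro mult_left_mono) auto
    finally show "esq (w k) \<le> (cmod (x k))\<^sup>2 * \<eta>" .
  qed
  have h4: "(\<Sum>k<M. (cmod (x k))\<^sup>2 * \<eta>) \<le> X * \<eta>"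
    unfolding sum_distrib_right[symmetric] X_def using \<eta> by (intro mult_right_mono) auto
  have "real M * (\<Sum>k<M. esq (w k)) \<le> real M * (X * \<eta>)"
    using h3 h4 by (intro mult_left_mono) auto
  hence "esq (x - s') \<le> 2 * esq t + 2 * (real M * (X * \<eta>))" using h1 h2 by linarith
  also have "2 * (real M * (X * \<eta>)) \<le> e\<^sup>2 / 2"
  proof -
    have "real M * (X * \<eta>) = e\<^sup>2 / 4 * (real M / (real M + 1))"
    proof -
      have M1: "real M + 1 > 0" by simp
      show ?thesis unfolding \<eta>_def using X M1 by (simp add: divide_simps)
    qed
    also have "\<dots> \<le> e\<^sup>2 / 4 * 1" by (intro mult_left_mono) auto
    finally show ?thesis by simp
  qed
  finally have "esq (x - s') < e\<^sup>2" using M unfolding t_def by simp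
  hence "l2_norm (x - s') < e" using e by (rule norm_lt)
  thus "\<exists>s\<in>S. l2_norm (x - s) < e" using s'S by blast
qed


context chainsys begin

lemma head_g: "head ((\<sigma> ^^ j) k) = head k"
  by (induction j) auto

lemma approx_ex: assumes c: "cmod c = 1" and \<eta>: "\<eta> > 0"
  shows "\<exists>a. cv k a \<in> l2 \<and> esq (\<lambda>p. delta k p - (cv k a p - c * V (cv k a) p)) < \<eta>"
proof -
  obtain n where n: "inverse (real (Suc n)) < \<eta>" using reals_Archimedean[OF \<eta>] by blast
  define M where "M = Suc n"
  have M: "M \<ge> 1" by (simp add: M_def)
  note ap = approx_chain[OF c M, of k]
  show ?thesis
  proof (intro exI conjI)
    show "cv k (\<lambda>j. if j < M then c ^ j * (1 - of_nat j / of_nat M) else 0) \<in> l2" by (rule ap(1))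
    have "esq (\<lambda>p. delta k p - (cv k (\<lambda>j. if j < M then c ^ j * (1 - of_nat j / of_nat M) else 0) p
        - c * V (cv k (\<lambda>j. if j < M then c ^ j * (1 - of_nat j / of_nat M) else 0)) p)) = 1 / real M"
      unfolding esq_def delta_def using ap(2) by (simp add: sums_iff)
    also have "\<dots> < \<eta>" using n by (simp add: M_def inverse_eq_divide)
    finally show "esq (\<lambda>p. delta k p - (cv k (\<lambda>j. if j < M then c ^ j * (1 - of_nat j / of_nat M) else 0) p
        - c * V (cv k (\<lambda>j. if j < M then c ^ j * (1 - of_nat j / of_nat M) else 0)) p)) < \<eta>" .
  qed
qed

lemma dense_D: "l2_dense D"
proof (rule dense_crit[OF subspace_D])
  fix k :: nat and \<eta> :: real assume "\<eta> > 0"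
  then obtain a where a: "cv k a \<in> l2" "esq (\<lambda>p. delta k p - (cv k a p - 1 * V (cv k a) p)) < \<eta>"
    using approx_ex[of 1 \<eta> k] by auto
  have "L (cv k a) \<in> D" using a by (simp add: D_def)
  moreover have "delta k - L (cv k a) = (\<lambda>p. delta k p - (cv k a p - 1 * V (cv k a) p))"
    by (simp add: L_def fun_eq_iff)
  ultimately show "\<exists>s\<in>D. esq (delta k - s) < \<eta>" using a by metis
qed

lemma subspace_AD: "linear_subspace (Aop ` D)"
proof -
  have lo: "lin_operator D Aop" by (rule lin_op)
  have sD: "linear_subspace D" by (rule subspace_D)
  show ?thesis unfolding linear_subspace_def
  proof (intro conjI ballI allI)
    show "Aop ` D \<subseteq> l2" using lo by (simp add: lin_operator_def)
    have "Aop 0 = 0"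
    proof -
      have "Aop (L 0) = 0" using A_L[OF l2_zero] by (simp add: V_zero fun_eq_iff)
      thus ?thesis using L_zero by simp
    qed
    moreover have "0 \<in> D" using sD by (simp add: linear_subspace_def)
    ultimately show "0 \<in> Aop ` D" by (metis image_eqI)
    fix x y assume "x \<in> Aop ` D" "y \<in> Aop ` D"
    then obtain u v where uv: "u \<in> D" "v \<in> D" "x = Aop u" "y = Aop v" by auto
    have "x + y = Aop (u + v)" using lo uv by (simp add: lin_operator_def)
    moreover have "u + v \<in> D" using sD uv by (simp add: linear_subspace_def)
    ultimately show "x + y \<in> Aop ` D" by blast
  next
    fix c x assume "x \<in> Aop ` D"
    then obtain u where u: "u \<in> D" "x = Aop u" by auto
    have "vscale c x = Aop (vscale c u)" using lo u by (simp add: lin_operator_def)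
    moreover have "vscale c u \<in> D" using sD u by (simp add: linear_subspace_def)
    ultimately show "vscale c x \<in> Aop ` D" by blast
  qed
qed

lemma dense_AD: "l2_dense (Aop ` D)"
proof (rule dense_crit[OF subspace_AD])
  fix k :: nat and \<eta> :: real assume "\<eta> > 0"
  then obtain a where a: "cv k a \<in> l2" "esq (\<lambda>p. delta k p - (cv k a p - (-1) * V (cv k a) p)) < \<eta>"
    using approx_ex[of "-1" \<eta> k] by auto
  define s where "s = vscale (- \<i> * eps k) (Aop (L (cv k a)))"
  have "Aop (L (cv k a)) \<in> Aop ` D" using a by (simp add: D_def)
  hence sin: "s \<in> Aop ` D" unfolding s_def using subspace_AD unfolding linear_subspace_def by blast
  have "s p = cv k a p - (-1) * V (cv k a) p" for p
  proof (cases "p \<in> range (gk k)")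
    case True
    then obtain j where j: "p = (\<sigma> ^^ j) k" by auto
    have "eps p = eps k" using j head_g by (simp add: eps_def)
    hence "eps k * eps p = 1" by simp
    have "s p = (eps k * eps p) * (cv k a p + V (cv k a) p)"
      by (simp add: s_def vscale_def A_L[OF a(1)] algebra_simps)
    also have "\<dots> = cv k a p + V (cv k a) p" by (simp only: \<open>eps k * eps p = 1\<close> mult_1)
    finally show ?thesis by simp
  next
    case False
    thus ?thesis by (simp add: s_def vscale_def A_L[OF a(1)] V_cv cv_off)
  qed
  hence "delta k - s = (\<lambda>p. delta k p - (cv k a p - (-1) * V (cv k a) p))" by (simp add: fun_eq_iff)
  thus "\<exists>s\<in>Aop ` D. esq (delta k - s) < \<eta>" using a sin by metis
qed

end


context chainsys begin

definition ca :: "complex \<Rightarrow> nat \<Rightarrow> complex" where "ca z q = cnj (\<i> * eps q - z)"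
definition cb :: "complex \<Rightarrow> nat \<Rightarrow> complex" where "cb z q = cnj (\<i> * eps q + z)"

lemma ca_s[simp]: "ca z (\<sigma> q) = ca z q" and cb_s[simp]: "cb z (\<sigma> q) = cb z q"
  by (simp_all add: ca_def cb_def)

lemma ca_bd: "cmod (ca z q) \<le> 1 + cmod z"
  unfolding ca_def complex_cnj_diff by (rule order_trans[OF norm_triangle_ineq4]) (simp add: norm_mult)
lemma cb_bd: "cmod (cb z q) \<le> 1 + cmod z"
  unfolding cb_def complex_cnj_add by (rule order_trans[OF norm_triangle_ineq]) (simp add: norm_mult)

lemma Vdelta: "V (delta q) = delta (\<sigma> q)"
proof (rule ext)
  fix p show "V (delta q) p = delta (\<sigma> q) p"
    by (cases "p \<in> range \<sigma>") (auto simp: V_notin delta_def inj_s inj_eq)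
qed

lemma range_elem: assumes "f \<in> l2"
  shows "Aop (L f) - vscale z (L f) = (\<lambda>p. (\<i> * eps p - z) * f p + (\<i> * eps p + z) * V f p)"
  unfolding A_L[OF assms] by (simp add: L_def vscale_def fun_eq_iff algebra_simps)

lemma def_char: "g \<in> defect_space D Aop z \<longleftrightarrow> g \<in> l2 \<and> (\<forall>q. g q * ca z q + g (\<sigma> q) * cb z q = 0)"
proof
  assume g: "g \<in> defect_space D Aop z"
  hence gl2: "g \<in> l2" by (simp add: defect_space_def orth_compl_def)
  have orth: "l2_inner g (Aop x - vscale z x) = 0" if "x \<in> D" for x
    using g that by (auto simp: defect_space_def orth_compl_def)
  show "g \<in> l2 \<and> (\<forall>q. g q * ca z q + g (\<sigma> q) * cb z q = 0)"
  proof (intro conjI allI gl2)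
    fix q
    have dq: "delta q \<in> l2" by (rule delta_l2)
    have "L (delta q) \<in> D" using dq by (simp add: D_def)
    hence o: "l2_inner g (Aop (L (delta q)) - vscale z (L (delta q))) = 0" by (rule orth)
    define y where "y = (\<lambda>p. (\<i> * eps p - z) * delta q p + (\<i> * eps p + z) * delta (\<sigma> q) p)"
    have yeq: "Aop (L (delta q)) - vscale z (L (delta q)) = y"
      unfolding range_elem[OF dq] Vdelta y_def ..
    have qs: "q \<noteq> \<sigma> q" using s_gt[of q] by simp
    have "(\<lambda>p. g p * cnj (y p)) sums (\<Sum>p\<in>{q, \<sigma> q}. g p * cnj (y p))"
      by (rule sums_finite) (auto simp: y_def delta_def)
    hence "l2_inner g y = (\<Sum>p\<in>{q, \<sigma> q}. g p * cnj (y p))" by (simp add: l2_inner_def sums_iff)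
    also have "\<dots> = g q * ca z q + g (\<sigma> q) * cb z q"
      using qs by (simp add: y_def delta_def ca_def cb_def)
    finally show "g q * ca z q + g (\<sigma> q) * cb z q = 0" using o yeq by simp
  qed
next
  assume as: "g \<in> l2 \<and> (\<forall>q. g q * ca z q + g (\<sigma> q) * cb z q = 0)"
  hence gl2: "g \<in> l2" and rec: "\<And>q. g q * ca z q + g (\<sigma> q) * cb z q = 0" by auto
  have ga: "(\<lambda>p. ca z p * g p) \<in> l2" by (rule l2_mult[OF ca_bd gl2])
  have gb: "(\<lambda>p. cb z p * g p) \<in> l2" by (rule l2_mult[OF cb_bd gl2])
  show "g \<in> defect_space D Aop z"
    unfolding defect_space_def orth_compl_def
  proof (intro CollectI conjI gl2 ballI)
    fix y assume "y \<in> (\<lambda>x. Aop x - vscale z x) ` D"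
    then obtain f where f: "f \<in> l2" "y = Aop (L f) - vscale z (L f)" by (auto simp: D_def)
    have Vf: "V f \<in> l2" using f V_l2 by simp
    have yy: "y = (\<lambda>p. (\<i> * eps p - z) * f p + (\<i> * eps p + z) * V f p)" using f range_elem by simp
    define t1 where "t1 p = (ca z p * g p) * cnj (f p)" for p
    define t2 where "t2 p = (cb z p * g p) * cnj (V f p)" for p
    have s1: "summable t1" unfolding t1_def by (rule inner_summable[OF ga f(1)])
    have s2: "summable t2" unfolding t2_def by (rule inner_summable[OF gb Vf])
    have "(\<lambda>q. t2 (\<sigma> q)) sums suminf t2"
      using s2 by (subst sums_mono_reindex[OF sm]) (auto simp: t2_def V_notin summable_sums)
    hence "(\<lambda>q. cb z q * g (\<sigma> q) * cnj (f q)) sums suminf t2" by (simp add: t2_def)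
    moreover have "t1 sums suminf t1" using s1 by (simp add: summable_sums)
    ultimately have "(\<lambda>q. t1 q + cb z q * g (\<sigma> q) * cnj (f q)) sums (suminf t1 + suminf t2)"
      by (intro sums_add)
    moreover have "(\<lambda>q. t1 q + cb z q * g (\<sigma> q) * cnj (f q)) = (\<lambda>q. 0)"
    proof
      fix q
      have "t1 q + cb z q * g (\<sigma> q) * cnj (f q) = (g q * ca z q + g (\<sigma> q) * cb z q) * cnj (f q)"
        by (simp add: t1_def algebra_simps)
      thus "t1 q + cb z q * g (\<sigma> q) * cnj (f q) = 0" using rec[of q] by simp
    qed
    ultimately have zero: "suminf t1 + suminf t2 = 0" by (simp add: sums_iff)
    have "l2_inner g y = (\<Sum>p. t1 p + t2 p)"
      unfolding l2_inner_def yy t1_def t2_def by (simp add: ca_def cb_def algebra_simps)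
    also have "\<dots> = suminf t1 + suminf t2" by (rule suminf_add[OF s1 s2, symmetric])
    finally show "l2_inner g y = 0" using zero by simp
  qed
qed

end


lemma norm_cmp:
  fixes z :: complex
  shows "Im z > 0 \<Longrightarrow> cmod (\<i> - z) < cmod (\<i> + z)" "Im z < 0 \<Longrightarrow> cmod (\<i> + z) < cmod (\<i> - z)"
proof -
  have a: "(cmod (\<i> - z))\<^sup>2 = (Re z)\<^sup>2 + (1 - Im z)\<^sup>2" unfolding cmod_power2 by simp
  have b: "(cmod (\<i> + z))\<^sup>2 = (Re z)\<^sup>2 + (1 + Im z)\<^sup>2" unfolding cmod_power2 by simp
  have d: "(cmod (\<i> + z))\<^sup>2 - (cmod (\<i> - z))\<^sup>2 = 4 * Im z" unfolding a b by (simp add: power2_eq_square algebra_simps)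
  show "Im z > 0 \<Longrightarrow> cmod (\<i> - z) < cmod (\<i> + z)"
  proof -
    assume "Im z > 0"
    hence "(cmod (\<i> - z))\<^sup>2 < (cmod (\<i> + z))\<^sup>2" using d by linarith
    thus ?thesis by (rule power2_less_imp_less) simp
  qed
  show "Im z < 0 \<Longrightarrow> cmod (\<i> + z) < cmod (\<i> - z)"
  proof -
    assume "Im z < 0"
    hence "(cmod (\<i> + z))\<^sup>2 < (cmod (\<i> - z))\<^sup>2" using d by linarith
    thus ?thesis by (rule power2_less_imp_less) simp
  qed
qed

interpretation vs: vector_space vscale
  by unfold_locales (auto simp: vscale_def fun_eq_iff algebra_simps)

lemma lin_indep_vs: assumes "finite B" "lin_independent B" shows "vs.independent B"
  unfolding vs.dependent_explicit
proof
  assume "\<exists>t u. finite t \<and> t \<subseteq> B \<and> (\<Sum>v\<in>t. vscale (u v) v) = 0 \<and> (\<exists>v\<in>t. u v \<noteq> 0)"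
  then obtain t u v where t: "finite t" "t \<subseteq> B" "(\<Sum>v\<in>t. vscale (u v) v) = 0" "v \<in> t" "u v \<noteq> 0" by blast
  define c where "c b = (if b \<in> t then u b else 0)" for b
  have "(\<Sum>b\<in>B. vscale (c b) b) = (\<Sum>b\<in>t. vscale (c b) b)"
    by (rule sum.mono_neutral_right[OF assms(1) t(2)]) (auto simp: c_def vscale_def fun_eq_iff)
  also have "\<dots> = (\<Sum>b\<in>t. vscale (u b) b)" by (rule sum.cong) (auto simp: c_def)
  finally have "(\<Sum>b\<in>B. vscale (c b) b) = 0" using t(3) by simp
  hence "c v = 0" using assms(2) t(2,4) unfolding lin_independent_def by blast
  thus False using t(4,5) by (simp add: c_def)
qed

definition ecard :: "'a set \<Rightarrow> enat" where "ecard X = (if finite X then enat (card X) else \<infinity>)"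

context chainsys begin

definition good :: "complex \<Rightarrow> nat \<Rightarrow> bool" where
  "good z c \<longleftrightarrow> (c \<in> P \<and> Im z > 0) \<or> (c \<notin> P \<and> Im z < 0)"

lemma head_head[simp]: "head (head p) = head p"
  using head_pow[OF head_dep(1)[of p], of 0] by simp

lemma eps_head[simp]: "eps (head p) = eps p" by (simp add: eps_def)

lemma ca_cb_cmp: assumes "Im z \<noteq> 0"
  shows "good z (head q) \<Longrightarrow> cmod (ca z q) < cmod (cb z q)"
    and "\<not> good z (head q) \<Longrightarrow> cmod (cb z q) < cmod (ca z q)"
proof -
  have m1: "cmod (- \<i> - z) = cmod (\<i> + z)" using norm_minus_cancel[of "\<i> + z"] by (simp add: algebra_simps)
  have m2: "cmod (- \<i> + z) = cmod (\<i> - z)" using norm_minus_cancel[of "\<i> - z"] by (simp add: algebra_simps)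
  show "good z (head q) \<Longrightarrow> cmod (ca z q) < cmod (cb z q)"
    using assms norm_cmp m1 m2 unfolding ca_def cb_def complex_mod_cnj by (auto simp: good_def eps_def)
  show "\<not> good z (head q) \<Longrightarrow> cmod (cb z q) < cmod (ca z q)"
    using assms norm_cmp[of z] m1 m2 unfolding ca_def cb_def complex_mod_cnj by (auto simp: good_def eps_def linorder_neq_iff)
qed

lemma good_head_s[simp]: "good z (head (\<sigma> q)) = good z (head q)" by simp

lemma bad_zero: assumes g: "g \<in> defect_space D Aop z" and z: "Im z \<noteq> 0" and bad: "\<not> good z (head q)"
  shows "g q = 0"
proof -
  have gl2: "g \<in> l2" and rec: "\<And>q. g q * ca z q + g (\<sigma> q) * cb z q = 0" using g def_char by auto
  have step: "cmod (g p) \<le> cmod (g (\<sigma> p))" if "\<not> good z (head p)" for p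
  proof -
    have lt: "cmod (cb z p) < cmod (ca z p)" using ca_cb_cmp(2)[OF z that] .
    have e: "g p * ca z p = - (g (\<sigma> p) * cb z p)" using rec[of p] by (simp add: eq_neg_iff_add_eq_0)
    have "cmod (g p) * cmod (ca z p) = cmod (g (\<sigma> p)) * cmod (cb z p)"
      using arg_cong[of _ _ cmod, OF e] by (simp add: norm_mult)
    also have "\<dots> \<le> cmod (g (\<sigma> p)) * cmod (ca z p)" using lt by (intro mult_left_mono) auto
    finally have "cmod (g p) * cmod (ca z p) \<le> cmod (g (\<sigma> p)) * cmod (ca z p)" .
    moreover have "cmod (ca z p) > 0" using lt norm_ge_zero[of "cb z p"] by linarith
    ultimately show ?thesis by (rule mult_right_le_imp_le)
  qed
  have all: "cmod (g q) \<le> cmod (g ((\<sigma> ^^ j) q))" for j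
  proof (induction j)
    case 0 thus ?case by simp
  next
    case (Suc j)
    have "\<not> good z (head ((\<sigma> ^^ j) q))" using bad head_g by simp
    thus ?case using step Suc by (simp add: order_trans)
  qed
  have "g \<longlonglongrightarrow> 0" using gl2 by (simp add: l2_iff l2_tendsto0)
  hence "(g \<circ> (\<lambda>j. (\<sigma> ^^ j) q)) \<longlonglongrightarrow> 0" using pow_sm by (rule LIMSEQ_subseq_LIMSEQ)
  hence "(\<lambda>j. cmod (g ((\<sigma> ^^ j) q))) \<longlonglongrightarrow> 0" by (simp add: tendsto_norm_zero comp_def)
  hence "cmod (g q) \<le> 0" using all by (intro LIMSEQ_le_const) auto
  thus ?thesis by simp
qed

definition rho :: "complex \<Rightarrow> nat \<Rightarrow> complex" where "rho z c = - ca z c / cb z c"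

lemma rho_lt: assumes "Im z \<noteq> 0" "good z (head c)" shows "cmod (rho z c) < 1" "cb z c \<noteq> 0"
proof -
  have lt: "cmod (ca z c) < cmod (cb z c)" by (rule ca_cb_cmp(1)[OF assms])
  thus "cb z c \<noteq> 0" by auto
  thus "cmod (rho z c) < 1" using lt by (simp add: rho_def norm_divide divide_less_eq)
qed

lemma ca_head: "ca z (head p) = ca z p" and cb_head: "cb z (head p) = cb z p"
  by (simp_all add: ca_def cb_def)

lemma good_rec: assumes g: "g \<in> defect_space D Aop z" and z: "Im z \<noteq> 0" and gd: "good z (head q)"
  shows "g (\<sigma> q) = rho z (head q) * g q"
proof -
  have rec: "g q * ca z q + g (\<sigma> q) * cb z q = 0" using g def_char by auto
  have nz: "cb z q \<noteq> 0" using rho_lt(2)[OF z, of q] gd by simp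
  show ?thesis using rec nz unfolding rho_def ca_head cb_head by (simp add: field_simps add_eq_0_iff)
qed

lemma good_pow: assumes g: "g \<in> defect_space D Aop z" and z: "Im z \<noteq> 0" and c: "c \<notin> range \<sigma>"
  and gd: "good z c"
  shows "g ((\<sigma> ^^ j) c) = rho z c ^ j * g c"
proof (induction j)
  case 0 thus ?case by simp
next
  case (Suc j)
  have h: "head ((\<sigma> ^^ j) c) = c" using c by simp
  have "g (\<sigma> ((\<sigma> ^^ j) c)) = rho z c * g ((\<sigma> ^^ j) c)"
    using good_rec[OF g z, of "(\<sigma> ^^ j) c"] h gd by simp
  thus ?case using Suc by simp
qed

lemma g_expand: assumes g: "g \<in> defect_space D Aop z" and z: "Im z \<noteq> 0"
  shows "g p = (if good z (head p) then g (head p) * rho z (head p) ^ dep p else 0)"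
proof (cases "good z (head p)")
  case True
  have "g p = g ((\<sigma> ^^ dep p) (head p))" using head_dep(2)[of p] by simp
  also have "\<dots> = rho z (head p) ^ dep p * g (head p)" by (rule good_pow[OF g z head_dep(1) True])
  finally show ?thesis using True by simp
next
  case False thus ?thesis using bad_zero[OF g z] by simp
qed

definition gam :: "complex \<Rightarrow> nat \<Rightarrow> vec" where "gam z c = cv c (\<lambda>j. rho z c ^ j)"

lemma gam_at: assumes "c \<notin> range \<sigma>" shows "gam z c p = (if head p = c then rho z c ^ dep p else 0)"
proof (cases "head p = c")
  case True
  hence "p = (\<sigma> ^^ dep p) c" using head_dep(2)[of p] by simp
  moreover have "gam z c ((\<sigma> ^^ dep p) c) = rho z c ^ dep p" by (simp add: gam_def)
  ultimately have "gam z c p = rho z c ^ dep p" by simp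
  thus ?thesis using True by simp
next
  case False
  have "p \<notin> range (gk c)" using False assms by auto
  thus ?thesis using False by (simp add: gam_def cv_off)
qed

lemma gam_l2: assumes "Im z \<noteq> 0" "good z c" "c \<notin> range \<sigma>" shows "gam z c \<in> l2"
proof -
  have hc: "head c = c" using head_pow[OF assms(3), of 0] by simp
  have r: "cmod (rho z c) < 1" using rho_lt(1)[OF assms(1)] assms(2) hc by simp
  have "summable (\<lambda>j. ((cmod (rho z c))\<^sup>2) ^ j)"
    by (rule summable_geometric) (use r in \<open>simp add: abs_square_less_1\<close>)
  hence "summable (\<lambda>j. (cmod (rho z c ^ j))\<^sup>2)" by (simp add: norm_power power_mult[symmetric] mult.commute)
  thus ?thesis unfolding gam_def by (rule cv_l2)
qed

lemma gam_in: assumes z: "Im z \<noteq> 0" and gd: "good z c" and c: "c \<notin> range \<sigma>"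
  shows "gam z c \<in> defect_space D Aop z"
proof -
  have hc: "head c = c" using head_pow[OF c, of 0] by simp
  have nz: "cb z c \<noteq> 0" using rho_lt(2)[OF z] gd hc by simp
  show ?thesis unfolding def_char
  proof (intro conjI allI gam_l2[OF z gd c])
    fix q
    show "gam z c q * ca z q + gam z c (\<sigma> q) * cb z q = 0"
    proof (cases "head q = c")
      case True
      have "ca z q = ca z c" "cb z q = cb z c" using True ca_head[of z q] cb_head[of z q] by simp_all
      thus ?thesis using True nz by (simp add: gam_at[OF c] rho_def field_simps)
    next
      case False thus ?thesis by (simp add: gam_at[OF c])
    qed
  qed
qed

lemma gam_head: assumes "c \<notin> range \<sigma>" "c' \<notin> range \<sigma>" shows "gam z c c' = (if c' = c then 1 else 0)"
proof -
  have "head c = c" "head c' = c'" "dep c' = 0" "dep c = 0" using head_pow[OF assms(1), of 0] head_pow[OF assms(2), of 0]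
    dep_pow[OF assms(2), of 0] dep_pow[OF assms(1), of 0] by simp_all
  thus ?thesis using assms by (simp add: gam_at)
qed

end


lemma enat_all_le: "(\<And>n::nat. enat n \<le> x) \<Longrightarrow> x = \<infinity>"
  by (cases x) (auto, metis Suc_n_not_le_n enat_ord_simps(1))

context chainsys begin

lemma gam_inj: "inj_on (gam z) {c. c \<notin> range \<sigma>}"
proof (rule inj_onI)
  fix c c' assume "c \<in> {c. c \<notin> range \<sigma>}" "c' \<in> {c. c \<notin> range \<sigma>}" "gam z c = gam z c'"
  hence "gam z c c = gam z c' c" "c \<notin> range \<sigma>" "c' \<notin> range \<sigma>" by auto
  thus "c = c'" using gam_head by (metis zero_neq_one)
qed

lemma lower: assumes z: "Im z \<noteq> 0" and B': "finite B'" "B' \<subseteq> {c. c \<notin> range \<sigma> \<and> good z c}"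
  shows "enat (card B') \<le> vdim (defect_space D Aop z)"
proof -
  define B where "B = gam z ` B'"
  have inj: "inj_on (gam z) B'" by (rule inj_on_subset[OF gam_inj[of z]]) (use B'(2) in auto)
  have cardB: "card B = card B'" unfolding B_def using inj by (rule card_image)
  have fin: "finite B" unfolding B_def using B' by simp
  have sub: "B \<subseteq> defect_space D Aop z" unfolding B_def using B'(2) gam_in[OF z] by auto
  have li: "lin_independent B" unfolding lin_independent_def
  proof (intro allI impI ballI)
    fix cf b assume s0: "(\<Sum>b\<in>B. vscale (cf b) b) = 0" and b: "b \<in> B"
    then obtain c where c: "c \<in> B'" "b = gam z c" by (auto simp: B_def)
    have hc: "c \<notin> range \<sigma>" using c B'(2) by auto
    have "0 = (\<Sum>b\<in>B. vscale (cf b) b) c" using s0 by simp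
    also have "\<dots> = (\<Sum>b\<in>B. cf b * b c)" by (simp add: sum_fun_app vscale_def)
    also have "\<dots> = (\<Sum>c'\<in>B'. cf (gam z c') * gam z c' c)"
      unfolding B_def by (rule sum.reindex[OF inj, unfolded comp_def])
    also have "\<dots> = (\<Sum>c'\<in>B'. if c' = c then cf (gam z c') else 0)"
    proof (rule sum.cong)
      fix c' assume "c' \<in> B'"
      hence "c' \<notin> range \<sigma>" using B'(2) by auto
      thus "cf (gam z c') * gam z c' c = (if c' = c then cf (gam z c') else 0)"
        using gam_head[OF _ hc, of c' z] by auto
    qed simp
    also have "\<dots> = cf b" using c B'(1) by (simp add: sum.delta)
    finally show "cf b = 0" by simp
  qed
  have "enat (card B) \<in> {enat (card B) | B. finite B \<and> B \<subseteq> defect_space D Aop z \<and> lin_independent B}"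
    using fin sub li by blast
  hence "enat (card B) \<le> vdim (defect_space D Aop z)" unfolding vdim_def by (rule Sup_upper)
  thus ?thesis using cardB by simp
qed

lemma expand_sum: assumes g: "g \<in> defect_space D Aop z" and z: "Im z \<noteq> 0"
  and G: "G = {c. c \<notin> range \<sigma> \<and> good z c}" "finite G"
  shows "g = (\<Sum>c\<in>G. vscale (g c) (gam z c))"
proof (rule ext)
  fix p
  have "(\<Sum>c\<in>G. vscale (g c) (gam z c)) p = (\<Sum>c\<in>G. g c * gam z c p)"
    by (simp add: sum_fun_app vscale_def)
  also have "\<dots> = (\<Sum>c\<in>G. if head p = c then g c * rho z c ^ dep p else 0)"
    by (rule sum.cong) (auto simp: G gam_at)
  also have "\<dots> = (if head p \<in> G then g (head p) * rho z (head p) ^ dep p else 0)"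
    using G(2) by (simp add: sum.delta)
  also have "\<dots> = g p" using g_expand[OF g z, of p] head_dep(1)[of p] by (simp add: G)
  finally show "g p = (\<Sum>c\<in>G. vscale (g c) (gam z c)) p" by simp
qed

lemma upper: assumes z: "Im z \<noteq> 0" and G: "G = {c. c \<notin> range \<sigma> \<and> good z c}" "finite G"
  shows "vdim (defect_space D Aop z) \<le> enat (card G)"
  unfolding vdim_def
proof (rule Sup_least)
  fix x assume "x \<in> {enat (card B) | B. finite B \<and> B \<subseteq> defect_space D Aop z \<and> lin_independent B}"
  then obtain B where B: "x = enat (card B)" "finite B" "B \<subseteq> defect_space D Aop z" "lin_independent B" by blast
  have ind: "vs.independent B" using lin_indep_vs B by simp
  have sp: "B \<subseteq> vs.span (gam z ` G)"
  proof
    fix g assume "g \<in> B"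
    hence gd: "g \<in> defect_space D Aop z" using B by auto
    have "(\<Sum>c\<in>G. vscale (g c) (gam z c)) \<in> vs.span (gam z ` G)"
      by (intro vs.span_sum vs.span_scale vs.span_base) auto
    thus "g \<in> vs.span (gam z ` G)" using expand_sum[OF gd z G] by simp
  qed
  have "card B \<le> card (gam z ` G)" using vs.independent_span_bound[OF _ ind sp] G(2) by simp
  also have "\<dots> \<le> card G" by (rule card_image_le[OF G(2)])
  finally show "x \<le> enat (card G)" using B by simp
qed

lemma vdim_defect: assumes z: "Im z \<noteq> 0"
  shows "vdim (defect_space D Aop z) = ecard {c. c \<notin> range \<sigma> \<and> good z c}"
proof (cases "finite {c. c \<notin> range \<sigma> \<and> good z c}")
  case True
  have "vdim (defect_space D Aop z) \<le> enat (card {c. c \<notin> range \<sigma> \<and> good z c})"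
    by (rule upper[OF z refl True])
  moreover have "enat (card {c. c \<notin> range \<sigma> \<and> good z c}) \<le> vdim (defect_space D Aop z)"
    by (rule lower[OF z True]) simp
  ultimately show ?thesis using True by (simp add: ecard_def)
next
  case False
  have "enat n \<le> vdim (defect_space D Aop z)" for n
  proof -
    obtain B' where "finite B'" "card B' = n" "B' \<subseteq> {c. c \<notin> range \<sigma> \<and> good z c}"
      using infinite_arbitrarily_large[OF False] by blast
    thus ?thesis using lower[OF z] by metis
  qed
  hence "vdim (defect_space D Aop z) = \<infinity>" by (rule enat_all_le)
  thus ?thesis using False by (simp add: ecard_def)
qed

lemma deficiency: "has_deficiency_index D Aop (ecard P) (ecard (- range \<sigma> - P))"
  unfolding has_deficiency_index_def
proof (intro allI impI conjI)
  fix z :: complex assume z: "Im z > 0"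
  have "{c. c \<notin> range \<sigma> \<and> good z c} = P" using z PH by (auto simp: good_def)
  thus "vdim (defect_space D Aop z) = ecard P" using vdim_defect[of z] z by simp
  have "{c. c \<notin> range \<sigma> \<and> good (cnj z) c} = - range \<sigma> - P" using z by (auto simp: good_def)
  thus "vdim (defect_space D Aop (cnj z)) = ecard (- range \<sigma> - P)" using vdim_defect[of "cnj z"] z by simp
qed

theorem main: "lin_operator D Aop \<and> closed_op D Aop \<and> symmetric_op D Aop \<and> inj_on Aop D
           \<and> l2_dense D \<and> l2_dense (Aop ` D) \<and> has_deficiency_index D Aop (ecard P) (ecard (- range \<sigma> - P))"
  using lin_op closed_A sym_A inj_A dense_D dense_AD deficiency by blast

end


lemma ecard_fin: "finite X \<Longrightarrow> ecard X = enat (card X)" by (simp add: ecard_def)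
lemma ecard_inf: "infinite X \<Longrightarrow> ecard X = \<infinity>" by (simp add: ecard_def)

lemma inf_image: "inj (f :: nat \<Rightarrow> nat) \<Longrightarrow> f ` UNIV \<subseteq> X \<Longrightarrow> infinite X"
proof -
  assume "inj f" "f ` UNIV \<subseteq> X"
  have "infinite (range f)" by (rule range_inj_infinite[OF \<open>inj f\<close>])
  thus "infinite X" using \<open>f ` UNIV \<subseteq> X\<close> finite_subset by blast
qed

lemma case_fin: assumes "a + b \<noteq> (0::nat)"
  shows "\<exists>\<sigma> P. chainsys \<sigma> P \<and> ecard P = enat a \<and> ecard (- range \<sigma> - P) = enat b"
proof -
  define N where "N = a + b"
  have N: "N > 0" using assms by (simp add: N_def)
  define \<sigma> where "\<sigma> k = k + N" for k
  have r: "range \<sigma> = {N..}"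
  proof
    show "range \<sigma> \<subseteq> {N..}" by (auto simp: \<sigma>_def)
    show "{N..} \<subseteq> range \<sigma>"
    proof
      fix p assume "p \<in> {N..}"
      hence "p = \<sigma> (p - N)" by (simp add: \<sigma>_def)
      thus "p \<in> range \<sigma>" by (metis rangeI)
    qed
  qed
  have cs: "chainsys \<sigma> {..<a}"
    unfolding chainsys_def using N r by (auto simp: \<sigma>_def strict_mono_def N_def)
  have c2: "- range \<sigma> - {..<a} = {a..<N}" using r by auto
  show ?thesis
    by (intro exI[of _ \<sigma>] exI[of _ "{..<a}"] conjI cs) (auto simp: c2 ecard_fin N_def)
qed

lemma inj_dbl: "inj (\<lambda>i::nat. 2 * i + c)" by (auto simp: inj_def)

lemma case_inf: assumes "n = \<infinity> \<or> m = \<infinity>"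
  shows "\<exists>\<sigma> P. chainsys \<sigma> P \<and> ecard P = n \<and> ecard (- range \<sigma> - P) = m"
proof -
  define \<sigma> where "\<sigma> k = 2 * k + 1" for k :: nat
  have r: "- range \<sigma> = {p. even p}"
  proof
    show "- range \<sigma> \<subseteq> {p. even p}"
    proof
      fix p assume p: "p \<in> - range \<sigma>"
      show "p \<in> {p. even p}"
      proof (rule ccontr)
        assume "p \<notin> {p. even p}"
        hence "p = \<sigma> (p div 2)" by (simp add: \<sigma>_def)
        thus False using p by (metis ComplD rangeI)
      qed
    qed
    show "{p. even p} \<subseteq> - range \<sigma>" by (auto simp: \<sigma>_def)
  qed
  have sm: "strict_mono \<sigma>" by (auto simp: strict_mono_def \<sigma>_def)
  have cs: "chainsys \<sigma> P" if "P \<subseteq> {p. even p}" for P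
    unfolding chainsys_def using sm that r by (auto simp: \<sigma>_def)
  consider "n = \<infinity>" "m = \<infinity>" | b where "n = \<infinity>" "m = enat b" | a where "n = enat a" "m = \<infinity>"
    using assms by (cases n; cases m) auto
  thus ?thesis
  proof cases
    case 1
    define P where "P = {p::nat. p mod 4 = 0}"
    have "(\<lambda>i. 4 * i) ` UNIV \<subseteq> P" by (auto simp: P_def)
    hence i1: "infinite P" by (rule inf_image[rotated]) (auto simp: inj_def)
    have "(\<lambda>i. 4 * i + 2) ` UNIV \<subseteq> - range \<sigma> - P" unfolding r by (auto simp: P_def; presburger)
    hence i2: "infinite (- range \<sigma> - P)" by (rule inf_image[rotated]) (auto simp: inj_def)
    have "P \<subseteq> {p. even p}" by (auto simp: P_def)
    thus ?thesis using i1 i2 1 cs by (intro exI[of _ \<sigma>] exI[of _ P]) (simp add: ecard_inf)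
  next
    case 2
    define P where "P = {p::nat. even p \<and> p \<ge> 2 * b}"
    have "(\<lambda>i. 2 * i + 2 * b) ` UNIV \<subseteq> P" by (auto simp: P_def)
    hence i1: "infinite P" by (rule inf_image[rotated]) (auto simp: inj_def)
    have e: "- range \<sigma> - P = (\<lambda>i. 2 * i) ` {..<b}"
      unfolding r P_def by (auto elim!: evenE)
    have "card (- range \<sigma> - P) = b" unfolding e by (subst card_image) (auto simp: inj_on_def)
    moreover have "finite (- range \<sigma> - P)" unfolding e by simp
    moreover have "P \<subseteq> {p. even p}" by (auto simp: P_def)
    ultimately show ?thesis using i1 2 cs by (intro exI[of _ \<sigma>] exI[of _ P]) (simp add: ecard_inf ecard_fin)
  next
    case 3
    define P where "P = {p::nat. even p \<and> p < 2 * a}"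
    have "(\<lambda>i. 2 * i + 2 * a) ` UNIV \<subseteq> - range \<sigma> - P" unfolding r by (auto simp: P_def)
    hence i2: "infinite (- range \<sigma> - P)" by (rule inf_image[rotated]) (auto simp: inj_def)
    have e: "P = (\<lambda>i. 2 * i) ` {..<a}" unfolding P_def by (auto elim!: evenE)
    have "card P = a" unfolding e by (subst card_image) (auto simp: inj_on_def)
    moreover have "finite P" unfolding e by simp
    moreover have "P \<subseteq> {p. even p}" by (auto simp: P_def)
    ultimately show ?thesis using i2 3 cs by (intro exI[of _ \<sigma>] exI[of _ P]) (simp add: ecard_inf ecard_fin)
  qed
qed

theorem lemma1:
  fixes n m :: enat
  assumes "n + m \<noteq> 0"
  shows "\<exists>D A. lin_operator D A \<and> closed_op D A \<and> symmetric_op D A \<and> inj_on A D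
           \<and> l2_dense D \<and> l2_dense (A ` D) \<and> has_deficiency_index D A n m"
proof -
  have "\<exists>\<sigma> P. chainsys \<sigma> P \<and> ecard P = n \<and> ecard (- range \<sigma> - P) = m"
  proof (cases "n = \<infinity> \<or> m = \<infinity>")
    case True thus ?thesis by (rule case_inf)
  next
    case False
    then obtain a b where ab: "n = enat a" "m = enat b" by (cases n; cases m) auto
    hence "a + b \<noteq> 0" using assms by (auto simp: zero_enat_def)
    thus ?thesis using case_fin ab by simp
  qed
  then obtain \<sigma> P where "chainsys \<sigma> P" "ecard P = n" "ecard (- range \<sigma> - P) = m" by blast
  thus ?thesis using chainsys.main[of \<sigma> P] by blast
qed


end
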